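(* Let Assumptions 1 and 2 hold. Let $\Gamma^\star\in\mathbb{R}^{2n\times n}$ be the unique solution of $\Gamma A_{\mathrm r}^\top+\beta\Gamma=G_{\mathrm f}$, and define $\epsilon(t)=\Gamma^\star(\mathrm{e}^{A_{\mathrm r}^\top t}-\mathrm{e}^{-\beta t}I_n)x_0$, where $x_0=x(0)$ is the initial state of the plant. Then, for every locally integrable input $u(\cdot)$ and all $t\ge 0$, \[\delta(t)=A_{\mathrm f}\phi(t)+B_{\mathrm f}\upsilon(t)+\epsilon(t).\]
   Context: Fix $n\ge 1$ and real numbers $a_1,\dots,a_n,b_1,\dots,b_n$. The plant is the continuous-time SISO system $y^{(n)}+a_1y^{(n-1)}+\dots+a_ny=b_1u^{(n-1)}+\dots+b_nu$, represented in observability canonical form $\dot x=Ax+Bu$, $y=Cx$, $x(t)\in\mathbb{R}^n$, where $C=[0_{1,n-1}\;1]$, $A$ is the $n\times n$ matrix whose first $n-1$ columns are $\begin{bmatrix}0_{1,n-1}\\ I_{n-1}\end{bmatrix}$ and whose last column is $(-a_n,\dots,-a_1)^\top$, and $B=(b_n,\dots,b_1)^\top$. Assumption 1: the polynomials $s^n+a_1s^{n-1}+\dots+a_n$ and $b_1s^{n-1}+\dots+b_n$ are coprime. For real parameters $c_1,\dots,c_n,\beta$, $A_{\mathrm r}\in\mathbb{R}^{n\times n}$ is the matrix whose first $n-1$ rows are $[0_{n-1,1}\;I_{n-1}]$ and whose last row is $(-c_n,\dots,-c_1)$, and $B_{\mathrm r}=(0,\dots,0,1)^\top\in\mathbb{R}^n$.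 Assumption 2: $-\beta$ is not an eigenvalue of $A_{\mathrm r}$. The filters are $\dot\zeta=A_{\mathrm r}\zeta+B_{\mathrm r}u$, $\zeta(0)=0$; $\dot\mu=A_{\mathrm r}\mu+B_{\mathrm r}y$, $\mu(0)=0$; $\chi=\mathrm{col}(\zeta,\mu)\in\mathbb{R}^{2n}$; $\dot\phi=-\beta\phi+\chi$, $\phi(0)=0_{2n,1}$; $\dot\upsilon=-\beta\upsilon+u$, $\upsilon(0)=0$; $\delta=\chi-\beta\phi$. Define $A_{\mathrm f}=\begin{bmatrix}A_{\mathrm r}&0_{n,n}\\ L_b& A_a\end{bmatrix}\in\mathbb{R}^{2n\times 2n}$, where $L_b\in\mathbb{R}^{n\times n}$ has all rows zero except the last, which equals $(b_n,\dots,b_1)$, and $A_a\in\mathbb{R}^{n\times n}$ has first $n-1$ rows $[0_{n-1,1}\;I_{n-1}]$ and last row $(-a_n,\dots,-a_1)$; $B_{\mathrm f}=\mathrm{col}(0_{n-1,1},1,0_{n,1})\in\mathbb{R}^{2n}$; and $G_{\mathrm f}\in\mathbb{R}^{2n\times n}$ is the matrix whose only nonzero entry is a $1$ in position $(2n,n)$. *)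

theory Defs
  imports "HOL-Analysis.Analysis" "HOL-Computational_Algebra.Polynomial"
begin

text \<open>Conventions: vectors of length m are functions nat \<Rightarrow> real used on indices 0..<m
 (0-based; paper index k corresponds to k-1); matrices are nat \<Rightarrow> nat \<Rightarrow> real
 (row, column). Coefficient sequences a, b, c are used at indices 1..n as in the paper.
 Trajectories are functions real \<Rightarrow> nat \<Rightarrow> real (time, component).\<close>

fun mpow :: "nat \<Rightarrow> (nat \<Rightarrow> nat \<Rightarrow> real) \<Rightarrow> nat \<Rightarrow> (nat \<Rightarrow> nat \<Rightarrow> real)" where
  "mpow m M 0 = (\<lambda>i j. if i = j then 1 else 0)"
| "mpow m M (Suc k) = (\<lambda>i j. \<Sum>l<m. mpow m M k i l * M l j)"

definition mexp :: "nat \<Rightarrow> (nat \<Rightarrow> nat \<Rightarrow> real) \<Rightarrow> real \<Rightarrow> (nat \<Rightarrow> nat \<Rightarrow> real)" where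
  "mexp m M t = (\<lambda>i j. \<Sum>k. (t ^ k / fact k) * mpow m M k i j)"

definition mtrans :: "(nat \<Rightarrow> nat \<Rightarrow> real) \<Rightarrow> (nat \<Rightarrow> nat \<Rightarrow> real)" where
  "mtrans M = (\<lambda>i j. M j i)"

text \<open>Observability canonical form of the plant.\<close>
definition A_plant :: "nat \<Rightarrow> (nat \<Rightarrow> real) \<Rightarrow> (nat \<Rightarrow> nat \<Rightarrow> real)" where
  "A_plant n a = (\<lambda>i j. if j = n - 1 then - a (n - i) else if i = j + 1 then 1 else 0)"

definition B_plant :: "nat \<Rightarrow> (nat \<Rightarrow> real) \<Rightarrow> (nat \<Rightarrow> real)" where
  "B_plant n b = (\<lambda>i. b (n - i))"

text \<open>Companion matrix A_r (and A_a, same shape with coefficients a).\<close>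
definition companion :: "nat \<Rightarrow> (nat \<Rightarrow> real) \<Rightarrow> (nat \<Rightarrow> nat \<Rightarrow> real)" where
  "companion n c = (\<lambda>i j. if i = n - 1 then - c (n - j) else if j = i + 1 then 1 else 0)"

definition B_r :: "nat \<Rightarrow> (nat \<Rightarrow> real)" where
  "B_r n = (\<lambda>i. if i = n - 1 then 1 else 0)"

definition L_b :: "nat \<Rightarrow> (nat \<Rightarrow> real) \<Rightarrow> (nat \<Rightarrow> nat \<Rightarrow> real)" where
  "L_b n b = (\<lambda>i j. if i = n - 1 then b (n - j) else 0)"

definition A_f :: "nat \<Rightarrow> (nat \<Rightarrow> real) \<Rightarrow> (nat \<Rightarrow> real) \<Rightarrow> (nat \<Rightarrow> real) \<Rightarrow> (nat \<Rightarrow> nat \<Rightarrow> real)" where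
  "A_f n a b c = (\<lambda>i j.
     if i < n then (if j < n then companion n c i j else 0)
     else (if j < n then L_b n b (i - n) j else companion n a (i - n) (j - n)))"

definition B_f :: "nat \<Rightarrow> (nat \<Rightarrow> real)" where
  "B_f n = (\<lambda>i. if i = n - 1 then 1 else 0)"

definition G_f :: "nat \<Rightarrow> (nat \<Rightarrow> nat \<Rightarrow> real)" where
  "G_f n = (\<lambda>i j. if i = 2 * n - 1 \<and> j = n - 1 then 1 else 0)"

definition den_poly :: "nat \<Rightarrow> (nat \<Rightarrow> real) \<Rightarrow> real poly" where
  "den_poly n a = monom 1 n + (\<Sum>k\<in>{1..n}. monom (a k) (n - k))"

definition num_poly :: "nat \<Rightarrow> (nat \<Rightarrow> real) \<Rightarrow> real poly" where
  "num_poly n b = (\<Sum>k\<in>{1..n}. monom (b k) (n - k))"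

definition is_eigenvalue :: "nat \<Rightarrow> (nat \<Rightarrow> nat \<Rightarrow> real) \<Rightarrow> real \<Rightarrow> bool" where
  "is_eigenvalue m M lam \<longleftrightarrow>
     (\<exists>v. (\<exists>i<m. v i \<noteq> 0) \<and> (\<forall>i<m. (\<Sum>j<m. M i j * v j) = lam * v i))"

text \<open>z solves z' = M z + f(t) on [0,\<infinity>) with z(0) = z0, in the Caratheodory
 (integral-equation) sense.\<close>
definition lin_sol :: "nat \<Rightarrow> (nat \<Rightarrow> nat \<Rightarrow> real) \<Rightarrow> (real \<Rightarrow> nat \<Rightarrow> real)
    \<Rightarrow> (nat \<Rightarrow> real) \<Rightarrow> (real \<Rightarrow> nat \<Rightarrow> real) \<Rightarrow> bool" where
  "lin_sol m M f z0 z \<longleftrightarrow>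
     (\<forall>t\<ge>0. \<forall>i<m. ((\<lambda>s. (\<Sum>j<m. M i j * z s j) + f s i) has_integral (z t i - z0 i)) {0..t})"

end

theory Submission
  imports Defs
begin

definition Iop :: "(real \<Rightarrow> real) \<Rightarrow> real \<Rightarrow> real" where
  "Iop f t = integral {0..t} f"

definition good :: "(real \<Rightarrow> real) \<Rightarrow> bool" where
  "good f \<longleftrightarrow> (\<forall>t. f integrable_on {0..t})"

lemma Iop_cmult[simp]: "Iop (\<lambda>s. k * f s) t = k * Iop f t"
  unfolding Iop_def by simp

lemma good_cont: "(\<And>t. continuous_on {0..t} f) \<Longrightarrow> good f"
  unfolding good_def by (simp add: integrable_continuous_interval)

lemma cont_Iop: "good f \<Longrightarrow> continuous_on {0..t} (Iop f)"
  unfolding good_def Iop_def by (simp add: indefinite_integral_continuous_1)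

lemma good_Iop: "good f \<Longrightarrow> good (Iop f)"
  by (rule good_cont) (rule cont_Iop)

lemma good_Ipow: "good f \<Longrightarrow> good ((Iop ^^ k) f)"
  by (induction k) (auto intro: good_Iop)

lemma good_add: "good f \<Longrightarrow> good g \<Longrightarrow> good (\<lambda>s. f s + g s)"
  unfolding good_def by (simp add: integrable_add)
lemma good_diff: "good f \<Longrightarrow> good g \<Longrightarrow> good (\<lambda>s. f s - g s)"
  unfolding good_def by (simp add: integrable_diff)
lemma good_cmult: "good f \<Longrightarrow> good (\<lambda>s. k * f s)"
  unfolding good_def using integrable_cmul[of f _ k] by simp
lemma good_neg: "good f \<Longrightarrow> good (\<lambda>s. - f s)"
  unfolding good_def by (simp add: integrable_neg)
lemma good_sum: "finite S \<Longrightarrow> (\<And>j. j \<in> S \<Longrightarrow> good (f j)) \<Longrightarrow> good (\<lambda>s. \<Sum>j\<in>S. f j s)"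
  unfolding good_def by (simp add: integrable_sum)
lemma good_const: "good (\<lambda>s. k)"
  by (rule good_cont) simp

lemma Iop_add: "good f \<Longrightarrow> good g \<Longrightarrow> Iop (\<lambda>s. f s + g s) t = Iop f t + Iop g t"
  unfolding good_def Iop_def by (simp add: integral_add)
lemma Iop_diff: "good f \<Longrightarrow> good g \<Longrightarrow> Iop (\<lambda>s. f s - g s) t = Iop f t - Iop g t"
  unfolding good_def Iop_def by (simp add: integral_diff)
lemma Iop_neg[simp]: "Iop (\<lambda>s. - f s) t = - Iop f t"
  unfolding Iop_def by simp
lemma Iop_sum: "finite S \<Longrightarrow> (\<And>j. j \<in> S \<Longrightarrow> good (f j)) \<Longrightarrow> Iop (\<lambda>s. \<Sum>j\<in>S. f j s) t = (\<Sum>j\<in>S. Iop (f j) t)"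
  unfolding good_def Iop_def by (simp add: integral_sum)
lemma Iop_cong: "(\<And>s. 0 \<le> s \<Longrightarrow> s \<le> t \<Longrightarrow> f s = g s) \<Longrightarrow> Iop f t = Iop g t"
  unfolding Iop_def by (rule integral_cong) auto

lemma Ipow_cmult[simp]: "(Iop ^^ k) (\<lambda>s. c * f s) t = c * (Iop ^^ k) f t"
proof (induction k arbitrary: t)
  case (Suc k)
  have "(Iop ^^ k) (\<lambda>s. c * f s) = (\<lambda>t. c * (Iop ^^ k) f t)"
    using Suc by (simp add: fun_eq_iff)
  then show ?case by simp
qed simp

lemma Ipow_sum: "finite S \<Longrightarrow> (\<And>j. j \<in> S \<Longrightarrow> good (f j)) \<Longrightarrow>
   (Iop ^^ k) (\<lambda>s. \<Sum>j\<in>S. f j s) t = (\<Sum>j\<in>S. (Iop ^^ k) (f j) t)"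
proof (induction k arbitrary: t)
  case (Suc k)
  have "(Iop ^^ k) (\<lambda>s. \<Sum>j\<in>S. f j s) = (\<lambda>t. \<Sum>j\<in>S. (Iop ^^ k) (f j) t)"
    using Suc by (simp add: fun_eq_iff)
  then show ?case using Suc by (simp add: Iop_sum good_Ipow)
qed simp

lemma Ipow_add: "good f \<Longrightarrow> good g \<Longrightarrow> (Iop ^^ k) (\<lambda>s. f s + g s) t = (Iop ^^ k) f t + (Iop ^^ k) g t"
proof (induction k arbitrary: t)
  case (Suc k)
  have "(Iop ^^ k) (\<lambda>s. f s + g s) = (\<lambda>t. (Iop ^^ k) f t + (Iop ^^ k) g t)"
    using Suc by (simp add: fun_eq_iff)
  then show ?case using Suc by (simp add: Iop_add good_Ipow)
qed simp

lemma Ipow_diff: "good f \<Longrightarrow> good g \<Longrightarrow> (Iop ^^ k) (\<lambda>s. f s - g s) t = (Iop ^^ k) f t - (Iop ^^ k) g t"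
proof (induction k arbitrary: t)
  case (Suc k)
  have "(Iop ^^ k) (\<lambda>s. f s - g s) = (\<lambda>t. (Iop ^^ k) f t - (Iop ^^ k) g t)"
    using Suc by (simp add: fun_eq_iff)
  then show ?case using Suc by (simp add: Iop_diff good_Ipow)
qed simp

lemma Ipow_cong: "(\<And>s. 0 \<le> s \<Longrightarrow> f s = g s) \<Longrightarrow> 0 \<le> t \<Longrightarrow> (Iop ^^ k) f t = (Iop ^^ k) g t"
proof (induction k arbitrary: t)
  case (Suc k)
  then show ?case by (simp, intro Iop_cong) auto
qed simp

lemma Ipow_Ipow: "(Iop ^^ k) ((Iop ^^ m) f) = (Iop ^^ (k + m)) f"
  by (simp add: funpow_add)

lemma Ipow_Iop: "(Iop ^^ k) (Iop f) = (Iop ^^ Suc k) f"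
  by (metis funpow_Suc_right o_apply)

lemma Iop_power: "0 \<le> t \<Longrightarrow> Iop (\<lambda>s. s ^ m / fact m) t = t ^ Suc m / fact (Suc m)"
proof -
  assume t: "0 \<le> t"
  have "((\<lambda>s. s ^ m / fact m) has_integral (t ^ Suc m / fact (Suc m) - 0 ^ Suc m / fact (Suc m))) {0..t}"
    apply (rule fundamental_theorem_of_calculus[OF t])
    apply (rule has_real_derivative_iff_has_vector_derivative[THEN iffD1])
    apply (rule derivative_eq_intros refl | simp)+
    done
  then show ?thesis unfolding Iop_def by (metis (no_types) integral_unique power_0_left Zero_not_Suc div_0 diff_zero)
qed

lemma lin_sol_hasint: "lin_sol m M f z0 z \<Longrightarrow> i < m \<Longrightarrow> 0 \<le> t \<Longrightarrow>
   ((\<lambda>s. (\<Sum>j<m. M i j * z s j) + f s i) has_integral (z t i - z0 i)) {0..t}"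
  unfolding lin_sol_def by blast

lemma lin_sol_int: "lin_sol m M f z0 z \<Longrightarrow> i < m \<Longrightarrow> 0 \<le> t \<Longrightarrow>
   z t i = z0 i + integral {0..t} (\<lambda>s. (\<Sum>j<m. M i j * z s j) + f s i)"
  using lin_sol_hasint[of m M f z0 z i t] by (simp add: integral_unique)

lemma lin_sol_cont: assumes "lin_sol m M f z0 z" "i < m"
  shows "continuous_on {0..T} (\<lambda>t. z t i)"
proof (cases "0 \<le> T")
  case True
  let ?g = "\<lambda>s. (\<Sum>j<m. M i j * z s j) + f s i"
  have "?g integrable_on {0..T}" using lin_sol_hasint[OF assms True] by blast
  then have "continuous_on {0..T} (\<lambda>t. integral {0..t} ?g)"
    by (rule indefinite_integral_continuous_1)
  then have "continuous_on {0..T} (\<lambda>t. z0 i + integral {0..t} ?g)"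
    by (intro continuous_intros)
  then show ?thesis
    by (rule continuous_on_eq) (use lin_sol_int[OF assms] in auto)
qed auto

lemma lin_sol_good: "lin_sol m M f z0 z \<Longrightarrow> i < m \<Longrightarrow> good (\<lambda>t. z t i)"
  by (rule good_cont) (rule lin_sol_cont)

lemma lin_sol_zero0: "lin_sol m M f z0 z \<Longrightarrow> i < m \<Longrightarrow> z 0 i = z0 i"
  using lin_sol_int[of m M f z0 z i 0] by simp

lemma quad_bound:
  fixes d :: "nat \<Rightarrow> real"
  shows "(\<Sum>i<m. d i * (\<Sum>j<m. M i j * d j)) \<le> (\<Sum>i<m. \<Sum>j<m. \<bar>M i j\<bar>) * (\<Sum>i<m. (d i)^2)"
proof -
  let ?S = "\<Sum>i<m. (d i)^2"
  have sq: "(d i)^2 \<le> ?S" if "i < m" for i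
    using that by (intro member_le_sum) auto
  have "d i * (M i j * d j) \<le> \<bar>M i j\<bar> * ?S" if "i < m" "j < m" for i j
  proof -
    have "\<bar>d i * d j\<bar> \<le> ((d i)^2 + (d j)^2) / 2"
      using sum_squares_bound[of "\<bar>d i\<bar>" "\<bar>d j\<bar>"]
      by (simp add: abs_mult power2_eq_square field_simps)
    also have "\<dots> \<le> ?S" using sq[OF that(1)] sq[OF that(2)] by simp
    finally have h: "\<bar>d i * d j\<bar> \<le> ?S" .
    have "d i * (M i j * d j) \<le> \<bar>M i j\<bar> * \<bar>d i * d j\<bar>"
      by (metis abs_ge_self abs_mult mult.left_commute)
    also have "\<dots> \<le> \<bar>M i j\<bar> * ?S" using h by (simp add: mult_left_mono)
    finally show ?thesis .
  qed
  then have "(\<Sum>i<m. \<Sum>j<m. d i * (M i j * d j)) \<le> (\<Sum>i<m. \<Sum>j<m. \<bar>M i j\<bar> * ?S)"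
    by (intro sum_mono) auto
  then have "(\<Sum>i<m. d i * (\<Sum>j<m. M i j * d j)) \<le> (\<Sum>i<m. \<Sum>j<m. \<bar>M i j\<bar> * ?S)"
    by (simp add: sum_distrib_left)
  also have "\<dots> = (\<Sum>i<m. \<Sum>j<m. \<bar>M i j\<bar>) * ?S"
    by (simp add: sum_distrib_right)
  finally show ?thesis .
qed

lemma lin_sol_uniq:
  assumes L: "lin_sol m M (\<lambda>s i. 0) (\<lambda>i. 0) d" and T: "0 \<le> T" and i: "i < m"
  shows "d T i = 0"
proof -
  define g where "g i s = (\<Sum>j<m. M i j * d s j)" for i s
  define K where "K = (\<Sum>i<m. \<Sum>j<m. \<bar>M i j\<bar>)"
  define V where "V t = (\<Sum>i<m. (d t i)^2) * exp (- (2 * K) * t)" for t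
  have cd: "continuous_on {0..T} (\<lambda>t. d t i)" if "i < m" for i
    using lin_sol_cont[OF L that] .
  have cg: "continuous_on {0..T} (g i)" if "i < m" for i
    unfolding g_def by (intro continuous_intros cd) auto
  have deq: "d t i = integral {0..t} (g i)" if "i < m" "0 \<le> t" for i t
    using lin_sol_int[OF L that] by (simp add: g_def[abs_def])
  have dd: "((\<lambda>t. d t i) has_real_derivative g i x) (at x)" if "i < m" "0 < x" "x < T" for i x
  proof -
    have "((\<lambda>t. integral {0..t} (g i)) has_real_derivative g i x) (at x within {0..T})"
      using integral_has_real_derivative[OF cg[OF that(1)]] that by auto
    then have "((\<lambda>t. d t i) has_real_derivative g i x) (at x within {0..T})"
      by (rule has_field_derivative_transform_within[where d=1]) (use that deq in auto)
    then show ?thesis using at_within_Icc_at[of 0 x T] that by simp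
  qed
  have cV: "continuous_on {0..T} V"
    unfolding V_def by (intro continuous_intros cd) auto
  have "V T \<le> V 0"
  proof (rule DERIV_nonpos_imp_decreasing_open[OF T _ cV])
    fix x assume x: "0 < x" "x < T"
    let ?S = "\<Sum>i<m. (d x i)^2"
    have "(V has_real_derivative
        ((\<Sum>i<m. 2 * d x i * g i x) * exp (- (2 * K) * x) + ?S * (exp (- (2 * K) * x) * (- (2 * K))))) (at x)"
    proof -
      have s1: "((\<lambda>t. \<Sum>i<m. (d t i)^2) has_real_derivative (\<Sum>i<m. 2 * d x i * g i x)) (at x)"
      proof (rule DERIV_sum)
        fix i assume "i \<in> {..<m}"
        then have "((\<lambda>t. d t i) has_real_derivative g i x) (at x)" using dd x by auto
        from DERIV_mult[OF this this] show "((\<lambda>t. (d t i)^2) has_real_derivative 2 * d x i * g i x) (at x)"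
          by (simp add: power2_eq_square algebra_simps)
      qed
      have s2: "((\<lambda>t. exp (- (2 * K) * t)) has_real_derivative exp (- (2 * K) * x) * (- (2 * K))) (at x)"
        by (rule derivative_eq_intros refl | simp)+
      show ?thesis unfolding V_def using DERIV_mult[OF s1 s2] by (simp add: mult_ac)
    qed
    moreover have "(\<Sum>i<m. 2 * d x i * g i x) \<le> 2 * K * ?S"
    proof -
      have "(\<Sum>i<m. 2 * d x i * g i x) = 2 * (\<Sum>i<m. d x i * (\<Sum>j<m. M i j * d x j))"
        by (simp add: g_def sum_distrib_left mult.assoc)
      also have "\<dots> \<le> 2 * (K * ?S)"
        using quad_bound[where d="d x" and m=m and M=M] unfolding K_def by simp
      finally show ?thesis by simp
    qed
    then have "(\<Sum>i<m. 2 * d x i * g i x) * exp (- (2 * K) * x) + ?S * (exp (- (2 * K) * x) * (- (2 * K))) \<le> 0"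
      by (simp add: algebra_simps mult_right_mono)
    ultimately show "\<exists>y. (V has_real_derivative y) (at x) \<and> y \<le> 0" by blast
  qed
  moreover have "V 0 = 0"
    unfolding V_def using lin_sol_zero0[OF L] by simp
  ultimately have "(\<Sum>i<m. (d T i)^2) \<le> 0"
    unfolding V_def by (simp add: mult_le_0_iff)
  then have "(\<Sum>i<m. (d T i)^2) = 0"
    by (meson antisym sum_nonneg zero_le_power2)
  then show ?thesis using i by (simp add: sum_nonneg_eq_0_iff)
qed

lemma mpow_bound:
  assumes "i < n" "j < n"
  shows "\<bar>mpow n M k i j\<bar> \<le> (\<Sum>l<n. \<Sum>j<n. \<bar>M l j\<bar>) ^ k"
  using assms(2)
proof (induction k arbitrary: j)
  case 0 then show ?case by simp
next
  case (Suc k)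
  let ?L = "\<Sum>l<n. \<Sum>j<n. \<bar>M l j\<bar>"
  have "\<bar>mpow n M (Suc k) i j\<bar> \<le> (\<Sum>l<n. \<bar>mpow n M k i l\<bar> * \<bar>M l j\<bar>)"
    by (simp add: abs_mult[symmetric] sum_abs)
  also have "\<dots> \<le> (\<Sum>l<n. ?L ^ k * \<bar>M l j\<bar>)"
    by (intro sum_mono mult_right_mono Suc.IH) auto
  also have "\<dots> = ?L ^ k * (\<Sum>l<n. \<bar>M l j\<bar>)" by (simp add: sum_distrib_left)
  also have "(\<Sum>l<n. \<bar>M l j\<bar>) \<le> ?L"
    by (intro sum_mono member_le_sum) (use Suc.prems in auto)
  then have "?L ^ k * (\<Sum>l<n. \<bar>M l j\<bar>) \<le> ?L ^ k * ?L"
    by (intro mult_left_mono) (auto intro!: zero_le_power sum_nonneg)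
  finally show ?case by (simp add: mult.commute)
qed

lemma ite_mult: "(if P then (1::real) else 0) * x = (if P then x else 0)"
  by simp

lemma mult_ite: "x * (if P then (1::real) else 0) = (if P then x else 0)"
  by simp

lemma mpow_Suc_left:
  assumes "i < n" "j < n"
  shows "mpow n M (Suc k) i j = (\<Sum>l<n. M i l * mpow n M k l j)"
  using assms
proof (induction k arbitrary: j)
  case 0 then show ?case by (simp add: ite_mult mult_ite)
next
  case (Suc k)
  have "mpow n M (Suc (Suc k)) i j = (\<Sum>l<n. mpow n M (Suc k) i l * M l j)" by simp
  also have "\<dots> = (\<Sum>l<n. (\<Sum>l'<n. M i l' * mpow n M k l' l) * M l j)"
    using Suc by (intro sum.cong) auto
  also have "\<dots> = (\<Sum>l<n. \<Sum>l'<n. M i l' * (mpow n M k l' l * M l j))"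
    by (simp add: sum_distrib_right mult.assoc)
  also have "\<dots> = (\<Sum>l'<n. \<Sum>l<n. M i l' * (mpow n M k l' l * M l j))"
    by (rule sum.swap)
  also have "\<dots> = (\<Sum>l'<n. M i l' * (\<Sum>l<n. mpow n M k l' l * M l j))"
    by (simp add: sum_distrib_left)
  finally show ?case by simp
qed

lemma mexp_summable:
  assumes "i < n" "j < n"
  shows "summable (\<lambda>k. mpow n M k i j / fact k * y ^ k)"
proof (rule summable_comparison_test')
  let ?L = "\<Sum>l<n. \<Sum>j<n. \<bar>M l j\<bar>"
  show "summable (\<lambda>k. inverse (fact k) * (?L * \<bar>y\<bar>) ^ k)" by (rule summable_exp)
  fix k :: nat
  have "norm (mpow n M k i j / fact k * y ^ k) = \<bar>mpow n M k i j\<bar> * \<bar>y\<bar> ^ k / fact k"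
    by (simp add: abs_mult power_abs)
  also have "\<dots> \<le> ?L ^ k * \<bar>y\<bar> ^ k / fact k"
    by (intro divide_right_mono mult_right_mono mpow_bound assms) auto
  finally show "norm (mpow n M k i j / fact k * y ^ k) \<le> inverse (fact k) * (?L * \<bar>y\<bar>) ^ k"
    by (simp add: power_mult_distrib field_simps)
qed

lemma mexp_alt: "mexp n M t i j = (\<Sum>k. mpow n M k i j / fact k * t ^ k)"
  unfolding mexp_def by (simp add: mult_ac)

lemma mexp_deriv:
  assumes "i < n" "j < n"
  shows "((\<lambda>t. mexp n M t i j) has_real_derivative (\<Sum>l<n. M i l * mexp n M t l j)) (at t)"
proof -
  let ?c = "\<lambda>k. mpow n M k i j / fact k"
  have "((\<lambda>t. \<Sum>k. ?c k * t ^ k) has_real_derivative (\<Sum>k. diffs ?c k * t ^ k)) (at t)"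
    by (rule termdiffs_strong_converges_everywhere) (rule mexp_summable[OF assms])
  moreover have "diffs ?c k = mpow n M (Suc k) i j / fact k" for k
    unfolding diffs_def by (simp del: mpow.simps add: fact_Suc)
  moreover have "(\<Sum>k. mpow n M (Suc k) i j / fact k * t ^ k) = (\<Sum>l<n. M i l * mexp n M t l j)"
  proof -
    have "(\<Sum>k. mpow n M (Suc k) i j / fact k * t ^ k) = (\<Sum>k. \<Sum>l<n. M i l * (mpow n M k l j / fact k * t ^ k))"
      by (simp del: mpow.simps add: mpow_Suc_left[OF assms] sum_distrib_right sum_distrib_left sum_divide_distrib mult_ac)
    also have "\<dots> = (\<Sum>l<n. \<Sum>k. M i l * (mpow n M k l j / fact k * t ^ k))"
      by (rule suminf_sum, rule summable_mult, rule mexp_summable) (use assms in auto)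
    also have "\<dots> = (\<Sum>l<n. M i l * mexp n M t l j)"
    proof (intro sum.cong refl)
      fix l assume "l \<in> {..<n}"
      then show "(\<Sum>k. M i l * (mpow n M k l j / fact k * t ^ k)) = M i l * mexp n M t l j"
        unfolding mexp_alt using suminf_mult[OF mexp_summable[where i=l and n=n and j=j and M=M and y=t], of "M i l"]
          assms \<open>l \<in> {..<n}\<close> by simp
    qed
    finally show ?thesis .
  qed
  ultimately show ?thesis unfolding mexp_alt by simp
qed

lemma mexp_zero: "mexp n M 0 i j = (if i = j then 1 else 0)"
  unfolding mexp_alt using powser_zero[of "\<lambda>k. mpow n M k i j / fact k"] by simp

definition Evec :: "nat \<Rightarrow> (nat \<Rightarrow> nat \<Rightarrow> real) \<Rightarrow> (nat \<Rightarrow> real) \<Rightarrow> real \<Rightarrow> nat \<Rightarrow> real" where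
  "Evec n M x0 t i = (\<Sum>k<n. mexp n M t i k * x0 k)"

lemma Evec_deriv: "i < n \<Longrightarrow> ((\<lambda>t. Evec n M x0 t i) has_real_derivative (\<Sum>l<n. M i l * Evec n M x0 t l)) (at t)"
  unfolding Evec_def
  apply (rule DERIV_cong)
   apply (rule DERIV_sum)
   apply (rule DERIV_cmult_right)
   apply (rule mexp_deriv)
    apply auto [2]
  apply (simp add: sum_distrib_left sum_distrib_right mult.assoc)
  apply (rule sum.swap)
  done

lemma Evec_zero: "i < n \<Longrightarrow> Evec n M x0 0 i = x0 i"
  unfolding Evec_def mexp_zero by (simp add: ite_mult)

lemma Evec_lin_sol: "lin_sol n M (\<lambda>s i. 0) x0 (Evec n M x0)"
  unfolding lin_sol_def
proof (intro allI impI)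
  fix t :: real and i assume t: "0 \<le> t" and i: "i < n"
  have "((\<lambda>s. \<Sum>l<n. M i l * Evec n M x0 s l) has_integral (Evec n M x0 t i - Evec n M x0 0 i)) {0..t}"
    by (rule fundamental_theorem_of_calculus[OF t])
       (auto intro!: has_field_derivative_at_within Evec_deriv[OF i]
             simp: has_real_derivative_iff_has_vector_derivative[symmetric])
  then show "((\<lambda>s. (\<Sum>j<n. M i j * Evec n M x0 s j) + 0) has_integral Evec n M x0 t i - x0 i) {0..t}"
    using Evec_zero[OF i] by simp
qed

lemma comp_row: "i < n \<Longrightarrow> (\<Sum>j<n. companion n c i j * w j) =
   (if i = n - 1 then (\<Sum>j<n. - c (n - j) * w j) else w (Suc i))"
proof (cases "i = n - 1")
  case True then show ?thesis by (simp add: companion_def)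
next
  case False
  assume i: "i < n"
  have "(\<Sum>j<n. companion n c i j * w j) = (\<Sum>j<n. if j = Suc i then w j else 0)"
    using False by (intro sum.cong) (auto simp: companion_def)
  also have "\<dots> = w (Suc i)" using False i by simp
  finally show ?thesis using False by simp
qed

lemma plant_row: "i < n \<Longrightarrow> (\<Sum>j<n. A_plant n a i j * w j) =
   (if i = 0 then 0 else w (i - 1)) - a (n - i) * w (n - 1)"
proof -
  assume i: "i < n"
  have "(\<Sum>j<n. A_plant n a i j * w j) = (\<Sum>j<n. (if j = n - 1 then - a (n - i) * w j else 0)
       + (if j \<noteq> n - 1 \<and> i = Suc j then w j else 0))"
    unfolding A_plant_def by (intro sum.cong) auto
  also have "\<dots> = - a (n - i) * w (n - 1) + (\<Sum>j<n. if j \<noteq> n - 1 \<and> i = Suc j then w j else 0)"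
    using i by (simp add: sum.distrib)
  also have "(\<Sum>j<n. if j \<noteq> n - 1 \<and> i = Suc j then w j else 0) = (if i = 0 then 0 else w (i - 1))"
  proof (cases i)
    case 0 then show ?thesis by simp
  next
    case (Suc k)
    then have "(\<Sum>j<n. if j \<noteq> n - 1 \<and> i = Suc j then w j else 0) = (\<Sum>j<n. if j = k then w j else 0)"
      using i by (intro sum.cong) auto
    then show ?thesis using Suc i by simp
  qed
  finally show ?thesis by simp
qed

lemma comp_chain:
  assumes L: "lin_sol n (companion n c) (\<lambda>s i. B_r n i * v s) (\<lambda>_. 0) \<zeta>" and gv: "good v" and n: "1 \<le> n"
  shows "\<forall>t\<ge>0. \<forall>j<n. \<zeta> t j = (Iop ^^ (n - 1 - j)) (\<lambda>s. \<zeta> s (n - 1)) t"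
    and "\<forall>t\<ge>0. \<zeta> t (n - 1) + (\<Sum>m<n. c (Suc m) * (Iop ^^ Suc m) (\<lambda>s. \<zeta> s (n - 1)) t) = Iop v t"
proof -
  let ?F = "\<lambda>s. \<zeta> s (n - 1)"
  have gz: "good (\<lambda>s. \<zeta> s j)" if "j < n" for j using lin_sol_good[OF L that] .
  have row: "\<zeta> t i = Iop (\<lambda>s. \<zeta> s (Suc i)) t" if "i < n - 1" "0 \<le> t" for i t
  proof -
    have "\<zeta> t i = integral {0..t} (\<lambda>s. (\<Sum>j<n. companion n c i j * \<zeta> s j) + B_r n i * v s)"
      using lin_sol_int[OF L _ that(2), of i] that by simp
    also have "\<dots> = Iop (\<lambda>s. \<zeta> s (Suc i)) t"
      unfolding Iop_def using that by (simp add: comp_row B_r_def)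
    finally show ?thesis .
  qed
  have ch: "\<forall>j<n. j + k = n - 1 \<longrightarrow> (\<forall>t\<ge>0. \<zeta> t j = (Iop ^^ k) ?F t)" for k
  proof (induction k)
    case 0 then show ?case by simp
  next
    case (Suc k)
    show ?case
    proof (intro allI impI)
      fix j :: nat and t :: real
      assume j: "j < n" "j + Suc k = n - 1" and t: "0 \<le> t"
      have "\<zeta> t j = Iop (\<lambda>s. \<zeta> s (Suc j)) t" using row[OF _ t] j by simp
      also have "\<dots> = Iop ((Iop ^^ k) ?F) t"
        by (rule Iop_cong) (use Suc.IH j in auto)
      finally show "\<zeta> t j = (Iop ^^ Suc k) ?F t" by simp
    qed
  qed
  show chain: "\<forall>t\<ge>0. \<forall>j<n. \<zeta> t j = (Iop ^^ (n - 1 - j)) ?F t"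
    using ch by auto
  show "\<forall>t\<ge>0. \<zeta> t (n - 1) + (\<Sum>m<n. c (Suc m) * (Iop ^^ Suc m) ?F t) = Iop v t"
  proof (intro allI impI)
    fix t :: real assume t: "0 \<le> t"
    have gF: "good ?F" using gz n by simp
    have "\<zeta> t (n - 1) = integral {0..t} (\<lambda>s. (\<Sum>j<n. companion n c (n - 1) j * \<zeta> s j) + B_r n (n - 1) * v s)"
      using lin_sol_int[OF L _ t, of "n - 1"] n by simp
    also have "\<dots> = Iop (\<lambda>s. (\<Sum>j<n. - c (n - j) * \<zeta> s j) + v s) t"
      unfolding Iop_def using n by (simp add: comp_row B_r_def)
    also have "\<dots> = (\<Sum>j<n. - c (n - j) * Iop (\<lambda>s. \<zeta> s j) t) + Iop v t"
    proof -
      have g1: "good (\<lambda>s. \<Sum>j<n. - c (n - j) * \<zeta> s j)"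
        by (rule good_sum, simp, rule good_cmult, rule gz, simp)
      have "Iop (\<lambda>s. (\<Sum>j<n. - c (n - j) * \<zeta> s j) + v s) t = Iop (\<lambda>s. \<Sum>j<n. - c (n - j) * \<zeta> s j) t + Iop v t"
        by (rule Iop_add[OF g1 gv])
      also have "Iop (\<lambda>s. \<Sum>j<n. - c (n - j) * \<zeta> s j) t = (\<Sum>j<n. Iop (\<lambda>s. - c (n - j) * \<zeta> s j) t)"
        by (rule Iop_sum[where f="\<lambda>j s. - c (n - j) * \<zeta> s j"], simp, rule good_cmult, rule gz, simp)
      also have "\<dots> = (\<Sum>j<n. - c (n - j) * Iop (\<lambda>s. \<zeta> s j) t)"
        by (rule sum.cong[OF refl], rule Iop_cmult)
      finally show ?thesis .
    qed
    also have "(\<Sum>j<n. - c (n - j) * Iop (\<lambda>s. \<zeta> s j) t) = (\<Sum>j<n. - c (n - j) * (Iop ^^ (n - j)) ?F t)"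
    proof (intro sum.cong refl)
      fix j assume j: "j \<in> {..<n}"
      have "Iop (\<lambda>s. \<zeta> s j) t = Iop ((Iop ^^ (n - 1 - j)) ?F) t"
        by (rule Iop_cong) (use chain j in auto)
      also have "\<dots> = (Iop ^^ (n - j)) ?F t"
        using j by (simp add: Suc_diff_Suc[symmetric])
      finally show "- c (n - j) * Iop (\<lambda>s. \<zeta> s j) t = - c (n - j) * (Iop ^^ (n - j)) ?F t" by simp
    qed
    also have "\<dots> = - (\<Sum>m<n. c (Suc m) * (Iop ^^ Suc m) ?F t)"
    proof -
      have "(\<Sum>m<n. c (Suc m) * (Iop ^^ Suc m) ?F t) = (\<Sum>j<n. c (Suc (n - Suc j)) * (Iop ^^ Suc (n - Suc j)) ?F t)"
        by (rule sum.nat_diff_reindex[symmetric])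
      also have "\<dots> = (\<Sum>j<n. c (n - j) * (Iop ^^ (n - j)) ?F t)"
        by (intro sum.cong refl) (simp add: Suc_diff_Suc)
      finally show ?thesis by (simp add: sum_negf)
    qed
    finally show "\<zeta> t (n - 1) + (\<Sum>m<n. c (Suc m) * (Iop ^^ Suc m) ?F t) = Iop v t" by simp
  qed
qed

lemma good_pow: "good (\<lambda>s. k * (s ^ m / fact m))"
  by (rule good_cont) (intro continuous_intros, simp)

lemmas good_intros = good_add good_diff good_cmult good_neg good_sum good_const good_Ipow good_Iop good_pow

lemma plant_unroll:
  assumes L: "lin_sol n (A_plant n a) (\<lambda>s i. B_plant n b i * v s) x0 x" and gv: "good v" and n: "1 \<le> n"
  shows "\<forall>t\<ge>0. x t (n - 1) + (\<Sum>m<n. a (Suc m) * (Iop ^^ Suc m) (\<lambda>s. x s (n - 1)) t)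
     = (\<Sum>m<n. b (Suc m) * (Iop ^^ Suc m) v t) + (\<Sum>m<n. x0 (n - 1 - m) * (t ^ m / fact m))"
proof -
  let ?y = "\<lambda>s. x s (n - 1)"
  have gx: "good (\<lambda>s. x s j)" if "j < n" for j using lin_sol_good[OF L that] .
  have gy: "good ?y" using gx n by simp
  have gy': "good (\<lambda>s. x s (n - Suc 0))" using gy by simp
  have row: "x t i = x0 i + Iop (\<lambda>s. x s (i - 1)) t * (if i = 0 then 0 else 1) - a (n - i) * Iop ?y t + b (n - i) * Iop v t"
    if "i < n" "0 \<le> t" for i t
  proof -
    have "x t i = x0 i + integral {0..t} (\<lambda>s. (\<Sum>j<n. A_plant n a i j * x s j) + B_plant n b i * v s)"
      using lin_sol_int[OF L that(1) that(2)] by simp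
    also have "\<dots> = x0 i + Iop (\<lambda>s. (\<lambda>s. x s (i - 1) * (if i = 0 then 0 else 1) - a (n - i) * ?y s) s + b (n - i) * v s) t"
      unfolding Iop_def using that by (simp add: plant_row B_plant_def)
    also have "\<dots> = x0 i + Iop (\<lambda>s. x s (i - 1) * (if i = 0 then 0 else 1) - a (n - i) * ?y s) t + b (n - i) * Iop v t"
      using that by (subst Iop_add) (auto intro!: good_intros gy gv gy'
         simp: mult.commute[of _ "if i = 0 then 0 else 1"] gx)
    also have "Iop (\<lambda>s. x s (i - 1) * (if i = 0 then 0 else 1) - a (n - i) * ?y s) t
       = Iop (\<lambda>s. x s (i - 1)) t * (if i = 0 then 0 else 1) - a (n - i) * Iop ?y t"
      using that by (subst Iop_diff) (auto intro!: good_intros gy gv gy'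
         simp: mult.commute[of _ "if i = 0 then 0 else 1"] gx)
    finally show ?thesis by simp
  qed
  have inner: "\<forall>t\<ge>0. x t i = (\<Sum>m\<le>i. x0 (i - m) * (t ^ m / fact m))
      + (\<Sum>m\<le>i. b (n - i + m) * (Iop ^^ Suc m) v t - a (n - i + m) * (Iop ^^ Suc m) ?y t)"
    if "i < n" for i
    using that
  proof (induction i)
    case 0
    then show ?case using row[of 0] by simp
  next
    case (Suc i)
    show ?case
    proof (intro allI impI)
      fix t :: real assume t: "0 \<le> t"
      define R where "R s = (\<Sum>m\<le>i. x0 (i - m) * (s ^ m / fact m))
        + (\<Sum>m\<le>i. b (n - i + m) * (Iop ^^ Suc m) v s - a (n - i + m) * (Iop ^^ Suc m) ?y s)" for s
      have xi: "Iop (\<lambda>s. x s i) t = Iop R t"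
        by (rule Iop_cong) (use Suc R_def in auto)
      have g1: "good (\<lambda>s. \<Sum>m\<le>i. x0 (i - m) * (s ^ m / fact m))"
        by (rule good_sum, simp, rule good_pow)
      have g2: "good (\<lambda>s. \<Sum>m\<le>i. b (n - i + m) * (Iop ^^ Suc m) v s - a (n - i + m) * (Iop ^^ Suc m) ?y s)"
        by (rule good_sum) (auto intro!: good_intros gv gy gy')
      have "Iop R t = Iop (\<lambda>s. \<Sum>m\<le>i. x0 (i - m) * (s ^ m / fact m)) t
         + Iop (\<lambda>s. \<Sum>m\<le>i. b (n - i + m) * (Iop ^^ Suc m) v s - a (n - i + m) * (Iop ^^ Suc m) ?y s) t"
        unfolding R_def by (rule Iop_add[OF g1 g2])
      also have "Iop (\<lambda>s. \<Sum>m\<le>i. x0 (i - m) * (s ^ m / fact m)) t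
          = (\<Sum>m\<le>i. x0 (i - m) * (t ^ Suc m / fact (Suc m)))"
        by (subst Iop_sum[where f="\<lambda>m s. x0 (i - m) * (s ^ m / fact m)"], simp, rule good_pow)
           (rule sum.cong[OF refl], subst Iop_cmult, simp only: Iop_power[OF t])
      also have "Iop (\<lambda>s. \<Sum>m\<le>i. b (n - i + m) * (Iop ^^ Suc m) v s - a (n - i + m) * (Iop ^^ Suc m) ?y s) t
          = (\<Sum>m\<le>i. b (n - i + m) * (Iop ^^ Suc (Suc m)) v t - a (n - i + m) * (Iop ^^ Suc (Suc m)) ?y t)"
      proof -
        have "Iop (\<lambda>s. \<Sum>m\<le>i. b (n - i + m) * (Iop ^^ Suc m) v s - a (n - i + m) * (Iop ^^ Suc m) ?y s) t
          = (\<Sum>m\<le>i. Iop (\<lambda>s. b (n - i + m) * (Iop ^^ Suc m) v s - a (n - i + m) * (Iop ^^ Suc m) ?y s) t)"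
          by (rule Iop_sum[where f="\<lambda>m s. b (n - i + m) * (Iop ^^ Suc m) v s - a (n - i + m) * (Iop ^^ Suc m) ?y s"])
             (auto intro!: good_intros gv gy gy')
        also have "\<dots> = (\<Sum>m\<le>i. b (n - i + m) * (Iop ^^ Suc (Suc m)) v t - a (n - i + m) * (Iop ^^ Suc (Suc m)) ?y t)"
        proof (rule sum.cong[OF refl])
          fix m
          have "Iop (\<lambda>s. b (n - i + m) * (Iop ^^ Suc m) v s - a (n - i + m) * (Iop ^^ Suc m) ?y s) t
             = Iop (\<lambda>s. b (n - i + m) * (Iop ^^ Suc m) v s) t - Iop (\<lambda>s. a (n - i + m) * (Iop ^^ Suc m) ?y s) t"
            by (rule Iop_diff) (intro good_intros gv gy)+
          then show "Iop (\<lambda>s. b (n - i + m) * (Iop ^^ Suc m) v s - a (n - i + m) * (Iop ^^ Suc m) ?y s) t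
             = b (n - i + m) * (Iop ^^ Suc (Suc m)) v t - a (n - i + m) * (Iop ^^ Suc (Suc m)) ?y t"
            by (simp only: Iop_cmult funpow.simps o_apply)
        qed
        finally show ?thesis .
      qed
      finally have IR: "Iop (\<lambda>s. x s i) t = (\<Sum>m\<le>i. x0 (i - m) * (t ^ Suc m / fact (Suc m)))
          + (\<Sum>m\<le>i. b (n - i + m) * (Iop ^^ Suc (Suc m)) v t - a (n - i + m) * (Iop ^^ Suc (Suc m)) ?y t)"
        using xi by simp
      have "x t (Suc i) = x0 (Suc i) + Iop (\<lambda>s. x s i) t - a (n - Suc i) * Iop ?y t + b (n - Suc i) * Iop v t"
        using row[OF Suc.prems t] by simp
      also have "\<dots> = (\<Sum>m\<le>Suc i. x0 (Suc i - m) * (t ^ m / fact m))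
          + (\<Sum>m\<le>Suc i. b (n - Suc i + m) * (Iop ^^ Suc m) v t - a (n - Suc i + m) * (Iop ^^ Suc m) ?y t)"
      proof -
        have "(\<Sum>m\<le>i. b (n - Suc i + Suc m) * (Iop ^^ Suc (Suc m)) v t - a (n - Suc i + Suc m) * (Iop ^^ Suc (Suc m)) ?y t)
          = (\<Sum>m\<le>i. b (n - i + m) * (Iop ^^ Suc (Suc m)) v t - a (n - i + m) * (Iop ^^ Suc (Suc m)) ?y t)"
          by (rule sum.cong[OF refl]) (use Suc.prems in \<open>simp add: Suc_diff_Suc\<close>)
        then show ?thesis unfolding IR sum.atMost_Suc_shift by (simp add: algebra_simps)
      qed
      finally show "x t (Suc i) = (\<Sum>m\<le>Suc i. x0 (Suc i - m) * (t ^ m / fact m))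
          + (\<Sum>m\<le>Suc i. b (n - Suc i + m) * (Iop ^^ Suc m) v t - a (n - Suc i + m) * (Iop ^^ Suc m) ?y t)" .
    qed
  qed
  show ?thesis
  proof (intro allI impI)
    fix t :: real assume t: "0 \<le> t"
    have e: "{..n - 1} = {..<n}" using n by auto
    have "x t (n - 1) = (\<Sum>m<n. x0 (n - 1 - m) * (t ^ m / fact m))
      + (\<Sum>m<n. b (Suc m) * (Iop ^^ Suc m) v t - a (Suc m) * (Iop ^^ Suc m) ?y t)"
      using inner[of "n - 1"] n t unfolding e by (simp add: Suc_diff_le)
    then show "x t (n - 1) + (\<Sum>m<n. a (Suc m) * (Iop ^^ Suc m) ?y t)
     = (\<Sum>m<n. b (Suc m) * (Iop ^^ Suc m) v t) + (\<Sum>m<n. x0 (n - 1 - m) * (t ^ m / fact m))"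
      by (simp add: sum_subtractf)
  qed
qed

definition cst :: "nat \<Rightarrow> (nat \<Rightarrow> real) \<Rightarrow> (real \<Rightarrow> real) \<Rightarrow> real \<Rightarrow> real" where
  "cst n c f t = f t + (\<Sum>k<n. c (Suc k) * (Iop ^^ Suc k) f t)"

lemma Iop_hasint: "good f \<Longrightarrow> (f has_integral Iop f t) {0..t}"
  unfolding good_def Iop_def by (simp add: integrable_integral)

lemma cst_diff: "good f \<Longrightarrow> good g \<Longrightarrow> cst n c (\<lambda>s. f s - g s) t = cst n c f t - cst n c g t"
  unfolding cst_def by (simp del: funpow.simps add: Ipow_diff right_diff_distrib sum_subtractf)

lemma cst_add: "good f \<Longrightarrow> good g \<Longrightarrow> cst n c (\<lambda>s. f s + g s) t = cst n c f t + cst n c g t"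
  unfolding cst_def by (simp del: funpow.simps add: Ipow_add distrib_left sum.distrib)

lemma cst_cmult: "cst n c (\<lambda>s. k * f s) t = k * cst n c f t"
  unfolding cst_def by (simp del: funpow.simps add: distrib_left sum_distrib_left mult_ac)

lemma cst_sum: "finite S \<Longrightarrow> (\<And>j. j \<in> S \<Longrightarrow> good (f j)) \<Longrightarrow>
   cst n c (\<lambda>s. \<Sum>j\<in>S. f j s) t = (\<Sum>j\<in>S. cst n c (f j) t)"
  unfolding cst_def by (simp del: funpow.simps add: Ipow_sum sum_distrib_left sum.distrib sum.swap[of _ S])

lemma cst_cong: "(\<And>s. 0 \<le> s \<Longrightarrow> f s = g s) \<Longrightarrow> 0 \<le> t \<Longrightarrow> cst n c f t = cst n c g t"
  unfolding cst_def by (simp del: funpow.simps add: Ipow_cong[of f g])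

lemma cst_Ipow: "good f \<Longrightarrow> cst n c ((Iop ^^ m) f) t = (Iop ^^ m) (cst n c f) t"
proof -
  assume g: "good f"
  have "(Iop ^^ m) (cst n c f) t = (Iop ^^ m) (\<lambda>s. f s + (\<Sum>k<n. c (Suc k) * (Iop ^^ Suc k) f s)) t"
    unfolding cst_def by simp
  also have "\<dots> = (Iop ^^ m) f t + (Iop ^^ m) (\<lambda>s. \<Sum>k<n. c (Suc k) * (Iop ^^ Suc k) f s) t"
    by (rule Ipow_add) (auto intro!: good_intros g)
  also have "(Iop ^^ m) (\<lambda>s. \<Sum>k<n. c (Suc k) * (Iop ^^ Suc k) f s) t
       = (\<Sum>k<n. c (Suc k) * (Iop ^^ m) ((Iop ^^ Suc k) f) t)"
    by (subst Ipow_sum) (auto intro!: good_intros g)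
  also have "\<dots> = (\<Sum>k<n. c (Suc k) * (Iop ^^ Suc k) ((Iop ^^ m) f) t)"
    by (simp only: Ipow_Ipow add.commute)
  finally show ?thesis unfolding cst_def by simp
qed

lemma volterra_uniq:
  assumes gd: "good d" and n: "1 \<le> n" and h: "\<forall>t\<ge>0. cst n c d t = 0" and t: "0 \<le> t"
  shows "d t = 0"
proof -
  define D where "D s j = (Iop ^^ (n - 1 - j)) d s" for s j
  have gD: "good (\<lambda>s. D s j)" for j unfolding D_def by (intro good_intros gd)
  have L: "lin_sol n (companion n c) (\<lambda>s i. 0) (\<lambda>i. 0) D"
    unfolding lin_sol_def
  proof (intro allI impI)
    fix t :: real and i assume t: "0 \<le> t" and i: "i < n"
    show "((\<lambda>s. (\<Sum>j<n. companion n c i j * D s j) + 0) has_integral D t i - 0) {0..t}"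
    proof (cases "i = n - 1")
      case False
      have "((\<lambda>s. D s (Suc i)) has_integral Iop (\<lambda>s. D s (Suc i)) t) {0..t}"
        by (rule Iop_hasint[OF gD])
      moreover have "Iop (\<lambda>s. D s (Suc i)) t = D t i"
        unfolding D_def using False i
        by (simp add: Suc_diff_Suc[symmetric] del: funpow.simps) (metis Suc_diff_Suc diff_Suc_eq_diff_pred funpow.simps(2) o_apply zero_less_diff)
      ultimately show ?thesis using False i by (simp add: comp_row)
    next
      case True
      have "((\<lambda>s. \<Sum>j<n. - c (n - j) * D s j) has_integral Iop (\<lambda>s. \<Sum>j<n. - c (n - j) * D s j) t) {0..t}"
        by (rule Iop_hasint) (auto intro!: good_intros gD)
      moreover have "Iop (\<lambda>s. \<Sum>j<n. - c (n - j) * D s j) t = (\<Sum>j<n. - c (n - j) * Iop (\<lambda>s. D s j) t)"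
        by (subst Iop_sum) (auto intro!: good_intros gD simp del: minus_mult_left simp: Iop_cmult)
      moreover have "(\<Sum>j<n. - c (n - j) * Iop (\<lambda>s. D s j) t) = - (\<Sum>m<n. c (Suc m) * (Iop ^^ Suc m) d t)"
      proof -
        have "(\<Sum>m<n. c (Suc m) * (Iop ^^ Suc m) d t) = (\<Sum>j<n. c (Suc (n - Suc j)) * (Iop ^^ Suc (n - Suc j)) d t)"
          by (rule sum.nat_diff_reindex[symmetric])
        also have "\<dots> = (\<Sum>j<n. c (n - j) * Iop (\<lambda>s. D s j) t)"
          unfolding D_def by (intro sum.cong refl) (simp del: funpow.simps, metis Suc_diff_Suc funpow.simps(2) o_apply)
        finally show ?thesis by (simp add: sum_negf)
      qed
      moreover have "- (\<Sum>m<n. c (Suc m) * (Iop ^^ Suc m) d t) = D t i"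
      proof -
        have e: "d t + (\<Sum>m<n. c (Suc m) * (Iop ^^ Suc m) d t) = 0" using h t unfolding cst_def by blast
        have "D t i = d t" using True unfolding D_def by simp
        then show ?thesis using e by linarith
      qed
      ultimately show ?thesis using True i by (simp add: comp_row)
    qed
  qed
  have "D t (n - 1) = 0" using lin_sol_uniq[OF L t] n by simp
  then show ?thesis unfolding D_def by simp
qed

lemma mtrans_companion: "mtrans (companion n c) = A_plant n c"
  unfolding mtrans_def companion_def A_plant_def by (intro ext) auto

lemma r_lemma:
  assumes n: "1 \<le> n" and gu: "good u"
    and plant: "lin_sol n (A_plant n a) (\<lambda>s i. B_plant n b i * u s) x0 x"
    and zeta: "lin_sol n (companion n c) (\<lambda>s i. B_r n i * u s) (\<lambda>_. 0) \<zeta>"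
    and mu: "lin_sol n (companion n c) (\<lambda>s i. B_r n i * x s (n - 1)) (\<lambda>_. 0) \<mu>"
    and t: "0 \<le> t"
  shows "x t (n - 1) - (\<Sum>j<n. b (n - j) * \<zeta> t j) + (\<Sum>j<n. (a (n - j) - c (n - j)) * \<mu> t j)
     = Evec n (mtrans (companion n c)) x0 t (n - 1)"
proof -
  define y where "y s = x s (n - 1)" for s
  define F where "F s = \<zeta> s (n - 1)" for s
  define G where "G s = \<mu> s (n - 1)" for s
  define Ev where "Ev = Evec n (mtrans (companion n c)) x0"
  define \<xi> where "\<xi> s = (\<Sum>m<n. x0 (n - 1 - m) * (s ^ m / fact m))" for s
  have gy: "good y" unfolding y_def using lin_sol_good[OF plant] n by simp
  have gF: "good F" unfolding F_def using lin_sol_good[OF zeta] n by simp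
  have gG: "good G" unfolding G_def using lin_sol_good[OF mu] n by simp
  have gz: "good (\<lambda>s. \<zeta> s j)" if "j < n" for j using lin_sol_good[OF zeta that] .
  have gm: "good (\<lambda>s. \<mu> s j)" if "j < n" for j using lin_sol_good[OF mu that] .
  have mu': "lin_sol n (companion n c) (\<lambda>s i. B_r n i * y s) (\<lambda>_. 0) \<mu>"
    using mu unfolding y_def .
  have chz: "\<forall>s\<ge>0. \<forall>j<n. \<zeta> s j = (Iop ^^ (n - 1 - j)) F s"
    using comp_chain(1)[OF zeta gu n] unfolding F_def .
  have chm: "\<forall>s\<ge>0. \<forall>j<n. \<mu> s j = (Iop ^^ (n - 1 - j)) G s"
    using comp_chain(1)[OF mu' gy n] unfolding G_def .
  have vF: "\<forall>s\<ge>0. cst n c F s = Iop u s"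
    using comp_chain(2)[OF zeta gu n] unfolding F_def cst_def .
  have vG: "\<forall>s\<ge>0. cst n c G s = Iop y s"
    using comp_chain(2)[OF mu' gy n] unfolding G_def cst_def .
  have LE: "lin_sol n (A_plant n c) (\<lambda>s i. B_plant n (\<lambda>_. 0) i * (\<lambda>_. 0) s) x0 Ev"
    using Evec_lin_sol[of n "mtrans (companion n c)" x0] unfolding Ev_def mtrans_companion by simp
  have gE: "good (\<lambda>s. Ev s (n - 1))" using lin_sol_good[OF LE] n by simp
  have UE: "cst n c (\<lambda>s. Ev s (n - 1)) s = \<xi> s" if "0 \<le> s" for s
    using plant_unroll[OF LE good_const n] that unfolding cst_def \<xi>_def by simp
  define r where "r s = y s - (\<Sum>j<n. b (n - j) * \<zeta> s j) + (\<Sum>j<n. (a (n - j) - c (n - j)) * \<mu> s j)" for s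
  define r' where "r' s = y s - (\<Sum>m<n. b (Suc m) * (Iop ^^ m) F s) + (\<Sum>m<n. (a (Suc m) - c (Suc m)) * (Iop ^^ m) G s)" for s
  have gr: "good r" unfolding r_def by (intro good_intros gy gz gm) auto
  have rr': "r s = r' s" if "0 \<le> s" for s
  proof -
    have "(\<Sum>j<n. b (n - j) * \<zeta> s j) = (\<Sum>m<n. b (Suc m) * (Iop ^^ m) F s)"
    proof -
      have "(\<Sum>m<n. b (Suc m) * (Iop ^^ m) F s) = (\<Sum>j<n. b (Suc (n - Suc j)) * (Iop ^^ (n - Suc j)) F s)"
        by (rule sum.nat_diff_reindex[symmetric])
      also have "\<dots> = (\<Sum>j<n. b (n - j) * \<zeta> s j)"
        by (intro sum.cong refl) (use chz that in \<open>auto simp: Suc_diff_Suc\<close>)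
      finally show ?thesis by simp
    qed
    moreover have "(\<Sum>j<n. (a (n - j) - c (n - j)) * \<mu> s j) = (\<Sum>m<n. (a (Suc m) - c (Suc m)) * (Iop ^^ m) G s)"
    proof -
      have "(\<Sum>m<n. (a (Suc m) - c (Suc m)) * (Iop ^^ m) G s) = (\<Sum>j<n. (a (Suc (n - Suc j)) - c (Suc (n - Suc j))) * (Iop ^^ (n - Suc j)) G s)"
        by (rule sum.nat_diff_reindex[symmetric])
      also have "\<dots> = (\<Sum>j<n. (a (n - j) - c (n - j)) * \<mu> s j)"
        by (intro sum.cong refl) (use chm that in \<open>auto simp: Suc_diff_Suc\<close>)
      finally show ?thesis by simp
    qed
    ultimately show ?thesis unfolding r_def r'_def by simp
  qed
  have cr: "cst n c r t = \<xi> t" if t: "0 \<le> t" for t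
  proof -
    have Ux: "y t + (\<Sum>m<n. a (Suc m) * (Iop ^^ Suc m) y t) = (\<Sum>m<n. b (Suc m) * (Iop ^^ Suc m) u t) + \<xi> t"
      using plant_unroll[OF plant gu n] t unfolding y_def \<xi>_def by blast
    have cF: "cst n c ((Iop ^^ m) F) t = (Iop ^^ Suc m) u t" for m
    proof -
      have "cst n c ((Iop ^^ m) F) t = (Iop ^^ m) (cst n c F) t" by (rule cst_Ipow[OF gF])
      also have "\<dots> = (Iop ^^ m) (Iop u) t" by (rule Ipow_cong) (use vF t in auto)
      finally show ?thesis by (simp only: Ipow_Iop)
    qed
    have cG: "cst n c ((Iop ^^ m) G) t = (Iop ^^ Suc m) y t" for m
    proof -
      have "cst n c ((Iop ^^ m) G) t = (Iop ^^ m) (cst n c G) t" by (rule cst_Ipow[OF gG])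
      also have "\<dots> = (Iop ^^ m) (Iop y) t" by (rule Ipow_cong) (use vG t in auto)
      finally show ?thesis by (simp only: Ipow_Iop)
    qed
    have "cst n c r t = cst n c r' t" by (rule cst_cong[OF rr' t])
    also have "cst n c r' t = cst n c y t - (\<Sum>m<n. b (Suc m) * cst n c ((Iop ^^ m) F) t)
        + (\<Sum>m<n. (a (Suc m) - c (Suc m)) * cst n c ((Iop ^^ m) G) t)"
    proof -
      define S1 where "S1 s = (\<Sum>m<n. b (Suc m) * (Iop ^^ m) F s)" for s
      define S2 where "S2 s = (\<Sum>m<n. (a (Suc m) - c (Suc m)) * (Iop ^^ m) G s)" for s
      have g1: "good S1" unfolding S1_def by (intro good_intros gF) auto
      have g2: "good S2" unfolding S2_def by (intro good_intros gG) auto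
      have "cst n c r' t = cst n c (\<lambda>s. y s - S1 s) t + cst n c S2 t"
        unfolding r'_def S1_def[symmetric] S2_def[symmetric] by (rule cst_add) (intro good_intros gy g1, rule g2)
      also have "cst n c (\<lambda>s. y s - S1 s) t = cst n c y t - cst n c S1 t" by (rule cst_diff[OF gy g1])
      also have "cst n c S1 t = (\<Sum>m<n. cst n c (\<lambda>s. b (Suc m) * (Iop ^^ m) F s) t)"
        unfolding S1_def by (rule cst_sum) (auto intro!: good_intros gF)
      also have "cst n c S2 t = (\<Sum>m<n. cst n c (\<lambda>s. (a (Suc m) - c (Suc m)) * (Iop ^^ m) G s) t)"
        unfolding S2_def by (rule cst_sum) (auto intro!: good_intros gG)
      finally show ?thesis by (simp only: cst_cmult)
    qed
    also have "\<dots> = y t + (\<Sum>m<n. a (Suc m) * (Iop ^^ Suc m) y t) - (\<Sum>m<n. b (Suc m) * (Iop ^^ Suc m) u t)"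
      by (simp only: cF cG, simp only: cst_def left_diff_distrib sum_subtractf)
    also have "\<dots> = \<xi> t" using Ux by simp
    finally show "cst n c r t = \<xi> t" .
  qed
  define d where "d s = r s - Ev s (n - 1)" for s
  have gd: "good d" unfolding d_def by (rule good_diff[OF gr gE])
  have "\<forall>s\<ge>0. cst n c d s = 0"
    unfolding d_def using cst_diff[OF gr gE] cr UE by simp
  from volterra_uniq[OF gd n this t] show ?thesis
    unfolding d_def r_def y_def Ev_def by simp
qed

lemma lin_sol_Iop:
  assumes L: "lin_sol m M f z0 z" and i: "i < m" and gf: "good (\<lambda>s. f s i)" and t: "0 \<le> t"
  shows "z t i = z0 i + (\<Sum>j<m. M i j * Iop (\<lambda>s. z s j) t) + Iop (\<lambda>s. f s i) t"
proof -
  have gz: "good (\<lambda>s. z s j)" if "j < m" for j using lin_sol_good[OF L that] .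
  have "z t i = z0 i + Iop (\<lambda>s. (\<Sum>j<m. M i j * z s j) + f s i) t"
    using lin_sol_int[OF L i t] unfolding Iop_def .
  also have "Iop (\<lambda>s. (\<Sum>j<m. M i j * z s j) + f s i) t = Iop (\<lambda>s. \<Sum>j<m. M i j * z s j) t + Iop (\<lambda>s. f s i) t"
    by (rule Iop_add[OF _ gf]) (auto intro!: good_intros gz)
  also have "Iop (\<lambda>s. \<Sum>j<m. M i j * z s j) t = (\<Sum>j<m. Iop (\<lambda>s. M i j * z s j) t)"
    by (rule Iop_sum) (auto intro!: good_intros gz)
  finally show ?thesis by (simp only: Iop_cmult add.assoc)
qed

lemma good_u: "\<forall>t\<ge>0. u absolutely_integrable_on {0..t} \<Longrightarrow> good u"
  unfolding good_def
proof
  fix t :: real assume h: "\<forall>t\<ge>0. u absolutely_integrable_on {0..t}"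
  show "u integrable_on {0..t}"
  proof (cases "0 \<le> t")
    case True then show ?thesis using h absolutely_integrable_on_def by blast
  next
    case False then have "{0..t} = {}" by auto
    then show ?thesis by (metis has_integral_empty integrable_on_def)
  qed
qed

lemma sum_split2: "(\<Sum>j<2*(n::nat). f j) = (\<Sum>j<n. f j) + (\<Sum>j<n. f (n + j))"
proof -
  have "(\<Sum>j<2*n. f j) = sum f {0..<n} + sum f {n..<2*n}"
    by (simp add: lessThan_atLeast0 sum.atLeastLessThan_concat)
  also have "sum f {n..<2*n} = sum f {0+n..<n+n}" by (simp add: mult_2)
  also have "\<dots> = (\<Sum>j=0..<n. f (j + n))" by (rule sum.shift_bounds_nat_ivl)
  finally show ?thesis by (simp add: lessThan_atLeast0 add.commute)
qed

lemma lin_sol_1: "lin_sol (Suc 0) (\<lambda>_ _. k) (\<lambda>s _. f s) (\<lambda>_. z0) (\<lambda>s _. z s) \<longleftrightarrow>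
   (\<forall>t\<ge>0. ((\<lambda>s. k * z s + f s) has_integral (z t - z0)) {0..t})"
  unfolding lin_sol_def by simp

theorem lemma1:
  fixes n :: nat and a b c :: "nat \<Rightarrow> real" and \<beta> :: real
    and u :: "real \<Rightarrow> real" and x0 :: "nat \<Rightarrow> real"
    and x \<zeta> \<mu> \<phi> :: "real \<Rightarrow> nat \<Rightarrow> real" and \<upsilon> :: "real \<Rightarrow> real"
    and \<Gamma> :: "nat \<Rightarrow> nat \<Rightarrow> real"
  assumes n: "n \<ge> 1"
    and A1: "coprime (den_poly n a) (num_poly n b)"
    and A2: "\<not> is_eigenvalue n (companion n c) (- \<beta>)"
    and Gam: "\<forall>i<2*n. \<forall>j<n. (\<Sum>k<n. \<Gamma> i k * mtrans (companion n c) k j) + \<beta> * \<Gamma> i j = G_f n i j"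
    and u_loc: "\<forall>t\<ge>0. u absolutely_integrable_on {0..t}"
    and plant: "lin_sol n (A_plant n a) (\<lambda>s i. B_plant n b i * u s) x0 x"
    and zeta: "lin_sol n (companion n c) (\<lambda>s i. B_r n i * u s) (\<lambda>_. 0) \<zeta>"
    and mu: "lin_sol n (companion n c) (\<lambda>s i. B_r n i * x s (n - 1)) (\<lambda>_. 0) \<mu>"
    and phi: "lin_sol (2*n) (\<lambda>i j. if i = j then - \<beta> else 0)
                (\<lambda>s i. if i < n then \<zeta> s i else \<mu> s (i - n)) (\<lambda>_. 0) \<phi>"
    and ups: "\<forall>t\<ge>0. ((\<lambda>s. - \<beta> * \<upsilon> s + u s) has_integral \<upsilon> t) {0..t}"
  shows "\<forall>t\<ge>0. \<forall>i<2*n.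
     (if i < n then \<zeta> t i else \<mu> t (i - n)) - \<beta> * \<phi> t i
     = (\<Sum>j<2*n. A_f n a b c i j * \<phi> t j) + B_f n i * \<upsilon> t
       + (\<Sum>j<n. \<Gamma> i j * (\<Sum>k<n. (mexp n (mtrans (companion n c)) t j k
                                   - (if j = k then exp (- \<beta> * t) else 0)) * x0 k))"
proof (intro allI impI)
  fix t :: real and i assume t: "0 \<le> t" and i: "i < 2 * n"
  define M where "M = mtrans (companion n c)"
  define Ev where "Ev = Evec n M x0"
  define chi where "chi s j = (if j < n then \<zeta> s j else \<mu> s (j - n))" for s j
  define hG where "hG s = (\<Sum>l<n. G_f n i l * Ev s l)" for s
  define eps where "eps s = (\<Sum>j<n. \<Gamma> i j * (Ev s j - exp (- \<beta> * s) * x0 j))" for s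
  define w where "w s = chi s i - \<beta> * \<phi> s i - (\<Sum>j<2*n. A_f n a b c i j * \<phi> s j) - B_f n i * \<upsilon> s - eps s" for s
  have gu: "good u" by (rule good_u[OF u_loc])
  have gz: "good (\<lambda>s. \<zeta> s j)" if "j < n" for j using lin_sol_good[OF zeta that] .
  have gm: "good (\<lambda>s. \<mu> s j)" if "j < n" for j using lin_sol_good[OF mu that] .
  have gchi: "good (\<lambda>s. chi s j)" if "j < 2 * n" for j
    unfolding chi_def using gz gm[of "j - n"] that by (cases "j < n") auto
  have gphi: "good (\<lambda>s. \<phi> s j)" if "j < 2 * n" for j using lin_sol_good[OF phi that] .
  have upsL: "lin_sol (Suc 0) (\<lambda>_ _. - \<beta>) (\<lambda>s _. u s) (\<lambda>_. 0) (\<lambda>s _. \<upsilon> s)"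
    unfolding lin_sol_1 using ups by simp
  have gups: "good \<upsilon>" using lin_sol_good[OF upsL] by simp
  have LE: "lin_sol n M (\<lambda>s i. 0) x0 Ev" unfolding Ev_def by (rule Evec_lin_sol)
  have gE: "good (\<lambda>s. Ev s l)" if "l < n" for l using lin_sol_good[OF LE that] .
  have ghG: "good hG" unfolding hG_def by (intro good_intros gE) auto
  have dE: "((\<lambda>s. Ev s j) has_real_derivative (\<Sum>l<n. M j l * Ev s l)) (at s)" if "j < n" for j s
    unfolding Ev_def by (rule Evec_deriv[OF that])
  have key: "(\<Sum>j<n. \<Gamma> i j * (\<Sum>l<n. M j l * Ev s l)) = hG s - \<beta> * (\<Sum>l<n. \<Gamma> i l * Ev s l)" for s
  proof -
    have "(\<Sum>j<n. \<Gamma> i j * (\<Sum>l<n. M j l * Ev s l)) = (\<Sum>j<n. \<Sum>l<n. \<Gamma> i j * M j l * Ev s l)"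
      by (simp add: sum_distrib_left mult.assoc)
    also have "\<dots> = (\<Sum>l<n. \<Sum>j<n. \<Gamma> i j * M j l * Ev s l)" by (rule sum.swap)
    also have "\<dots> = (\<Sum>l<n. (G_f n i l - \<beta> * \<Gamma> i l) * Ev s l)"
    proof (intro sum.cong refl)
      fix l assume l: "l \<in> {..<n}"
      have "(\<Sum>j<n. \<Gamma> i j * M j l) = G_f n i l - \<beta> * \<Gamma> i l"
        using Gam i l unfolding M_def by (simp add: eq_diff_eq)
      then show "(\<Sum>j<n. \<Gamma> i j * M j l * Ev s l) = (G_f n i l - \<beta> * \<Gamma> i l) * Ev s l"
        by (simp add: sum_distrib_right[symmetric])
    qed
    also have "\<dots> = hG s - \<beta> * (\<Sum>l<n. \<Gamma> i l * Ev s l)"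
      unfolding hG_def by (simp add: left_diff_distrib sum_subtractf sum_distrib_left mult.assoc)
    finally show ?thesis .
  qed
  have deps: "(eps has_real_derivative (- \<beta> * eps s + hG s)) (at s)" for s
  proof -
    have "(eps has_real_derivative (\<Sum>j<n. \<Gamma> i j * ((\<Sum>l<n. M j l * Ev s l) - exp (- \<beta> * s) * (- \<beta>) * x0 j))) (at s)"
      unfolding eps_def
    proof (rule DERIV_sum)
      fix j assume j: "j \<in> {..<n}"
      have e: "((\<lambda>s. exp (- \<beta> * s) * x0 j) has_real_derivative exp (- \<beta> * s) * (- \<beta>) * x0 j) (at s)"
        by (auto intro!: derivative_eq_intros)
      show "((\<lambda>s. \<Gamma> i j * (Ev s j - exp (- \<beta> * s) * x0 j)) has_real_derivative
          \<Gamma> i j * ((\<Sum>l<n. M j l * Ev s l) - exp (- \<beta> * s) * (- \<beta>) * x0 j)) (at s)"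
        using j by (intro DERIV_cmult DERIV_diff dE e) auto
    qed
    moreover have "(\<Sum>j<n. \<Gamma> i j * ((\<Sum>l<n. M j l * Ev s l) - exp (- \<beta> * s) * (- \<beta>) * x0 j))
        = - \<beta> * eps s + hG s"
    proof -
      let ?e = "exp (- \<beta> * s)"
      have "(\<Sum>j<n. \<Gamma> i j * ((\<Sum>l<n. M j l * Ev s l) - ?e * (- \<beta>) * x0 j))
          = (\<Sum>j<n. \<Gamma> i j * (\<Sum>l<n. M j l * Ev s l) + (\<beta> * ?e) * (\<Gamma> i j * x0 j))"
        by (intro sum.cong refl) (simp add: algebra_simps)
      also have "\<dots> = (\<Sum>j<n. \<Gamma> i j * (\<Sum>l<n. M j l * Ev s l)) + (\<beta> * ?e) * (\<Sum>j<n. \<Gamma> i j * x0 j)"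
        by (simp add: sum.distrib sum_distrib_left)
      also have "\<dots> = hG s - \<beta> * (\<Sum>l<n. \<Gamma> i l * Ev s l) + (\<beta> * ?e) * (\<Sum>j<n. \<Gamma> i j * x0 j)"
        by (simp only: key)
      finally have A: "(\<Sum>j<n. \<Gamma> i j * ((\<Sum>l<n. M j l * Ev s l) - ?e * (- \<beta>) * x0 j))
          = hG s - \<beta> * (\<Sum>l<n. \<Gamma> i l * Ev s l) + (\<beta> * ?e) * (\<Sum>j<n. \<Gamma> i j * x0 j)" .
      have B: "eps s = (\<Sum>l<n. \<Gamma> i l * Ev s l) - ?e * (\<Sum>j<n. \<Gamma> i j * x0 j)"
      proof -
        have "eps s = (\<Sum>j<n. \<Gamma> i j * Ev s j - ?e * (\<Gamma> i j * x0 j))"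
          unfolding eps_def by (intro sum.cong refl) (simp add: algebra_simps)
        then show ?thesis by (simp add: sum_subtractf sum_distrib_left[symmetric] sum_negf)
      qed
      show ?thesis unfolding A B by (simp only: right_diff_distrib mult.assoc mult_minus_left mult_minus_right)
    qed
    ultimately show ?thesis by simp
  qed
  have epsL: "lin_sol (Suc 0) (\<lambda>_ _. - \<beta>) (\<lambda>s _. hG s) (\<lambda>_. 0) (\<lambda>s _. eps s)"
    unfolding lin_sol_1
  proof (intro allI impI)
    fix t :: real assume t: "0 \<le> t"
    have "((\<lambda>s. - \<beta> * eps s + hG s) has_integral (eps t - eps 0)) {0..t}"
      proof (rule fundamental_theorem_of_calculus[OF t])
      fix x assume "x \<in> {0..t}"
      have "(eps has_real_derivative (- \<beta> * eps x + hG x)) (at x within {0..t})"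
        by (rule has_field_derivative_at_within[OF deps])
      then show "(eps has_vector_derivative (- \<beta> * eps x + hG x)) (at x within {0..t})"
        by (simp add: has_real_derivative_iff_has_vector_derivative)
    qed
    moreover have "eps 0 = 0" unfolding eps_def Ev_def using Evec_zero by simp
    ultimately show "((\<lambda>s. - \<beta> * eps s + hG s) has_integral (eps t - 0)) {0..t}" by simp
  qed
  have geps: "good eps" using lin_sol_good[OF epsL] by simp
  have gy: "good (\<lambda>s. x s (n - 1))" using lin_sol_good[OF plant] n by simp
  have gw: "good w" unfolding w_def
    by (intro good_intros gchi gphi gups geps i) auto
  have W: "w tt = - \<beta> * Iop w tt" if tt: "0 \<le> tt" for tt
  proof -
    let ?C = "\<lambda>j. Iop (\<lambda>s. chi s j) tt"
    let ?P = "\<lambda>j. Iop (\<lambda>s. \<phi> s j) tt"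
    have Phi: "\<phi> tt j = - \<beta> * ?P j + ?C j" if j: "j < 2 * n" for j
    proof -
      have gc: "good (\<lambda>s. (\<lambda>s i. if i < n then \<zeta> s i else \<mu> s (i - n)) s j)"
        using gchi[OF j] unfolding chi_def .
      have "\<phi> tt j = 0 + (\<Sum>k<2*n. (if j = k then - \<beta> else 0) * ?P k) + ?C j"
        using lin_sol_Iop[OF phi j gc tt] unfolding chi_def by simp
      also have "(\<Sum>k<2*n. (if j = k then - \<beta> else 0) * ?P k) = (\<Sum>k<2*n. if j = k then - \<beta> * ?P k else 0)"
        by (intro sum.cong refl) simp
      also have "\<dots> = - \<beta> * ?P j" using j by simp
      finally show ?thesis by simp
    qed
    have Ups: "\<upsilon> tt = - \<beta> * Iop \<upsilon> tt + Iop u tt"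
      using lin_sol_Iop[OF upsL _ _ tt, of 0] gu by simp
    have Eps: "eps tt = - \<beta> * Iop eps tt + Iop hG tt"
      using lin_sol_Iop[OF epsL _ _ tt, of 0] ghG by simp
    have Csplit: "(\<Sum>j<2*n. A_f n a b c i j * ?C j) = (\<Sum>j<n. A_f n a b c i j * Iop (\<lambda>s. \<zeta> s j) tt)
        + (\<Sum>j<n. A_f n a b c i (n + j) * Iop (\<lambda>s. \<mu> s j) tt)"
      unfolding sum_split2 chi_def by simp
    have hG0: "hG = (\<lambda>s. 0)" if "i \<noteq> 2 * n - 1"
      unfolding hG_def G_f_def using that by (simp add: fun_eq_iff)
    have X: "chi tt i = (\<Sum>j<2*n. A_f n a b c i j * ?C j) + B_f n i * Iop u tt + Iop hG tt"
    proof (cases "i < n")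
      case True
      have ne: "i \<noteq> 2 * n - 1" using True by simp
      have "\<zeta> tt i = 0 + (\<Sum>j<n. companion n c i j * Iop (\<lambda>s. \<zeta> s j) tt) + Iop (\<lambda>s. B_r n i * u s) tt"
        using lin_sol_Iop[OF zeta True good_cmult[OF gu] tt] .
      moreover have "(\<Sum>j<2*n. A_f n a b c i j * ?C j) = (\<Sum>j<n. companion n c i j * Iop (\<lambda>s. \<zeta> s j) tt)"
        unfolding Csplit using True by (simp add: A_f_def)
      moreover have "B_f n i = B_r n i" unfolding B_f_def B_r_def by simp
      moreover have "Iop hG tt = 0" unfolding hG0[OF ne] Iop_def by simp
      ultimately show ?thesis using True unfolding chi_def by simp
    next
      case False
      define i' where "i' = i - n"
      have i': "i' < n" "i = n + i'" using False i unfolding i'_def by auto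
      have mu_eq: "\<mu> tt i' = 0 + (\<Sum>j<n. companion n c i' j * Iop (\<lambda>s. \<mu> s j) tt) + Iop (\<lambda>s. B_r n i' * x s (n - 1)) tt"
        using lin_sol_Iop[OF mu i'(1) good_cmult[OF gy] tt] .
      have AC: "(\<Sum>j<2*n. A_f n a b c i j * ?C j) = (\<Sum>j<n. L_b n b i' j * Iop (\<lambda>s. \<zeta> s j) tt)
          + (\<Sum>j<n. companion n a i' j * Iop (\<lambda>s. \<mu> s j) tt)"
        unfolding Csplit using i' by (simp add: A_f_def)
      have Bf: "B_f n i = 0" unfolding B_f_def using i' by simp
      show ?thesis
      proof (cases "i' = n - 1")
        case False
        have ne: "i \<noteq> 2 * n - 1" using False i' by simp
        have "Iop hG tt = 0" unfolding hG0[OF ne] Iop_def by simp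
        moreover have "(\<Sum>j<n. L_b n b i' j * Iop (\<lambda>s. \<zeta> s j) tt) = 0"
          unfolding L_b_def using False by simp
        moreover have "(\<Sum>j<n. companion n a i' j * Iop (\<lambda>s. \<mu> s j) tt) = Iop (\<lambda>s. \<mu> s (Suc i')) tt"
          using comp_row[OF i'(1), of a] False by simp
        moreover have "chi tt i = Iop (\<lambda>s. \<mu> s (Suc i')) tt"
        proof -
          have "Iop (\<lambda>s. B_r n i' * x s (n - 1)) tt = 0" unfolding B_r_def Iop_def using False by simp
          then show ?thesis unfolding chi_def using i' False mu_eq comp_row[OF i'(1), of c] by simp
        qed
        ultimately show ?thesis by (simp only: AC Bf)
      next
        case True
        have hGe: "hG s = Ev s (n - 1)" for s
        proof -
          have "hG s = (\<Sum>l<n. if l = n - 1 then Ev s l else 0)"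
            unfolding hG_def G_f_def using i' True by (intro sum.cong refl) auto
          then show ?thesis using n by simp
        qed
        define r where "r s = x s (n - 1) - (\<Sum>j<n. b (n - j) * \<zeta> s j) + (\<Sum>j<n. (a (n - j) - c (n - j)) * \<mu> s j)" for s
        have "Iop hG tt = Iop r tt"
          unfolding hGe
        proof (rule Iop_cong)
          fix s :: real assume "0 \<le> s"
          then show "Ev s (n - 1) = r s"
            using r_lemma[OF n gu plant zeta mu] unfolding r_def Ev_def M_def by simp
        qed
        also have "Iop r tt = Iop (\<lambda>s. x s (n - 1)) tt - (\<Sum>j<n. b (n - j) * Iop (\<lambda>s. \<zeta> s j) tt)
            + (\<Sum>j<n. (a (n - j) - c (n - j)) * Iop (\<lambda>s. \<mu> s j) tt)"
        proof -
          have g1: "good (\<lambda>s. \<Sum>j<n. b (n - j) * \<zeta> s j)" by (rule good_sum) (auto intro: good_cmult gz)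
          have g2: "good (\<lambda>s. \<Sum>j<n. (a (n - j) - c (n - j)) * \<mu> s j)" by (rule good_sum) (auto intro: good_cmult gm)
          have "Iop r tt = Iop (\<lambda>s. x s (n - 1) - (\<Sum>j<n. b (n - j) * \<zeta> s j)) tt + Iop (\<lambda>s. \<Sum>j<n. (a (n - j) - c (n - j)) * \<mu> s j) tt"
            unfolding r_def by (rule Iop_add[OF good_diff[OF gy g1] g2])
          also have "Iop (\<lambda>s. x s (n - 1) - (\<Sum>j<n. b (n - j) * \<zeta> s j)) tt = Iop (\<lambda>s. x s (n - 1)) tt - Iop (\<lambda>s. \<Sum>j<n. b (n - j) * \<zeta> s j) tt"
            by (rule Iop_diff[OF gy g1])
          also have "Iop (\<lambda>s. \<Sum>j<n. b (n - j) * \<zeta> s j) tt = (\<Sum>j<n. b (n - j) * Iop (\<lambda>s. \<zeta> s j) tt)"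
            by (subst Iop_sum[where f="\<lambda>j s. b (n - j) * \<zeta> s j"]) (auto intro: good_cmult gz)
          also have "Iop (\<lambda>s. \<Sum>j<n. (a (n - j) - c (n - j)) * \<mu> s j) tt = (\<Sum>j<n. (a (n - j) - c (n - j)) * Iop (\<lambda>s. \<mu> s j) tt)"
            by (subst Iop_sum[where f="\<lambda>j s. (a (n - j) - c (n - j)) * \<mu> s j"]) (auto intro: good_cmult gm)
          finally show ?thesis .
        qed
        finally have IhG: "Iop hG tt = Iop (\<lambda>s. x s (n - 1)) tt - (\<Sum>j<n. b (n - j) * Iop (\<lambda>s. \<zeta> s j) tt)
            + (\<Sum>j<n. a (n - j) * Iop (\<lambda>s. \<mu> s j) tt) - (\<Sum>j<n. c (n - j) * Iop (\<lambda>s. \<mu> s j) tt)"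
          by (simp add: left_diff_distrib sum_subtractf)
        have Lb: "(\<Sum>j<n. L_b n b i' j * Iop (\<lambda>s. \<zeta> s j) tt) = (\<Sum>j<n. b (n - j) * Iop (\<lambda>s. \<zeta> s j) tt)"
          unfolding L_b_def using True by simp
        have ca: "(\<Sum>j<n. companion n a i' j * Iop (\<lambda>s. \<mu> s j) tt) = - (\<Sum>j<n. a (n - j) * Iop (\<lambda>s. \<mu> s j) tt)"
          using comp_row[OF i'(1), of a] True by (simp add: sum_negf)
        have cc: "(\<Sum>j<n. companion n c i' j * Iop (\<lambda>s. \<mu> s j) tt) = - (\<Sum>j<n. c (n - j) * Iop (\<lambda>s. \<mu> s j) tt)"
          using comp_row[OF i'(1), of c] True by (simp add: sum_negf)
        have "chi tt i = \<mu> tt i'" unfolding chi_def using i' by simp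
        also have "\<dots> = - (\<Sum>j<n. c (n - j) * Iop (\<lambda>s. \<mu> s j) tt) + Iop (\<lambda>s. x s (n - 1)) tt"
          using mu_eq cc True unfolding B_r_def by simp
        finally show ?thesis unfolding AC Bf Lb ca IhG by simp
      qed
    qed
    have Iw: "Iop w tt = ?C i - \<beta> * ?P i - (\<Sum>j<2*n. A_f n a b c i j * ?P j) - B_f n i * Iop \<upsilon> tt - Iop eps tt"
    proof -
      have g1: "good (\<lambda>s. \<Sum>j<2*n. A_f n a b c i j * \<phi> s j)" by (intro good_intros gphi) auto
      have g0: "good (\<lambda>s. chi s i - \<beta> * \<phi> s i)" by (rule good_diff[OF gchi[OF i] good_cmult[OF gphi[OF i]]])
      have g2: "good (\<lambda>s. chi s i - \<beta> * \<phi> s i - (\<Sum>j<2*n. A_f n a b c i j * \<phi> s j))"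
        by (rule good_diff[OF g0 g1])
      have g3: "good (\<lambda>s. chi s i - \<beta> * \<phi> s i - (\<Sum>j<2*n. A_f n a b c i j * \<phi> s j) - B_f n i * \<upsilon> s)"
        by (rule good_diff[OF g2 good_cmult[OF gups]])
      have "Iop w tt = Iop (\<lambda>s. chi s i - \<beta> * \<phi> s i - (\<Sum>j<2*n. A_f n a b c i j * \<phi> s j) - B_f n i * \<upsilon> s) tt - Iop eps tt"
        unfolding w_def by (rule Iop_diff[OF g3 geps])
      also have "Iop (\<lambda>s. chi s i - \<beta> * \<phi> s i - (\<Sum>j<2*n. A_f n a b c i j * \<phi> s j) - B_f n i * \<upsilon> s) tt
         = Iop (\<lambda>s. chi s i - \<beta> * \<phi> s i - (\<Sum>j<2*n. A_f n a b c i j * \<phi> s j)) tt - B_f n i * Iop \<upsilon> tt"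
        by (subst Iop_diff[OF g2 good_cmult[OF gups]]) simp
      also have "Iop (\<lambda>s. chi s i - \<beta> * \<phi> s i - (\<Sum>j<2*n. A_f n a b c i j * \<phi> s j)) tt
         = Iop (\<lambda>s. chi s i - \<beta> * \<phi> s i) tt - Iop (\<lambda>s. \<Sum>j<2*n. A_f n a b c i j * \<phi> s j) tt"
        by (rule Iop_diff[OF g0 g1])
      also have "Iop (\<lambda>s. chi s i - \<beta> * \<phi> s i) tt = ?C i - \<beta> * ?P i"
        by (subst Iop_diff[OF gchi[OF i] good_cmult[OF gphi[OF i]]]) simp
      also have "Iop (\<lambda>s. \<Sum>j<2*n. A_f n a b c i j * \<phi> s j) tt = (\<Sum>j<2*n. A_f n a b c i j * ?P j)"
        by (subst Iop_sum[where f="\<lambda>j s. A_f n a b c i j * \<phi> s j"]) (auto intro!: good_cmult gphi)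
      finally show ?thesis .
    qed
    have SA: "(\<Sum>j<2*n. A_f n a b c i j * \<phi> tt j) = - \<beta> * (\<Sum>j<2*n. A_f n a b c i j * ?P j) + (\<Sum>j<2*n. A_f n a b c i j * ?C j)"
    proof -
      have "(\<Sum>j<2*n. A_f n a b c i j * \<phi> tt j) = (\<Sum>j<2*n. A_f n a b c i j * ?C j - \<beta> * (A_f n a b c i j * ?P j))"
        by (intro sum.cong refl) (simp add: Phi algebra_simps)
      then show ?thesis by (simp add: sum_subtractf sum_distrib_left[symmetric] sum_negf)
    qed
    show ?thesis unfolding w_def Iw SA Phi[OF i] Ups Eps X by (simp add: algebra_simps)
  qed
  have wL: "lin_sol (Suc 0) (\<lambda>_ _. - \<beta>) (\<lambda>s _. 0) (\<lambda>_. 0) (\<lambda>s _. w s)"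
    unfolding lin_sol_1
  proof (intro allI impI)
    fix tt :: real assume tt: "0 \<le> tt"
    have "((\<lambda>s. - \<beta> * w s) has_integral Iop (\<lambda>s. - \<beta> * w s) tt) {0..tt}"
      by (rule Iop_hasint) (intro good_intros gw)
    then show "((\<lambda>s. - \<beta> * w s + 0) has_integral (w tt - 0)) {0..tt}"
      using W[OF tt] by (simp only: Iop_cmult add_0_right diff_zero)
  qed
  have w0: "w t = 0" using lin_sol_uniq[OF wL t, of 0] by simp
  have epsf: "eps t = (\<Sum>j<n. \<Gamma> i j * (\<Sum>k<n. (mexp n (mtrans (companion n c)) t j k
                                   - (if j = k then exp (- \<beta> * t) else 0)) * x0 k))"
    unfolding eps_def
  proof (intro sum.cong refl)
    fix j assume j: "j \<in> {..<n}"
    have s2: "(\<Sum>k<n. (if j = k then exp (- \<beta> * t) else 0) * x0 k) = exp (- \<beta> * t) * x0 j"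
    proof -
      have "(\<Sum>k<n. (if j = k then exp (- \<beta> * t) else 0) * x0 k) = (\<Sum>k<n. if j = k then exp (- \<beta> * t) * x0 k else 0)"
        by (intro sum.cong refl) simp
      then show ?thesis using j by simp
    qed
    have "(\<Sum>k<n. (mexp n (mtrans (companion n c)) t j k - (if j = k then exp (- \<beta> * t) else 0)) * x0 k)
       = (\<Sum>k<n. mexp n M t j k * x0 k) - (\<Sum>k<n. (if j = k then exp (- \<beta> * t) else 0) * x0 k)"
      unfolding M_def by (simp only: left_diff_distrib sum_subtractf)
    also have "\<dots> = Ev t j - exp (- \<beta> * t) * x0 j" unfolding s2 Ev_def Evec_def by simp
    finally show "\<Gamma> i j * (Ev t j - exp (- \<beta> * t) * x0 j) = \<Gamma> i j * (\<Sum>k<n. (mexp n (mtrans (companion n c)) t j k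
                                   - (if j = k then exp (- \<beta> * t) else 0)) * x0 k)" by simp
  qed
  show "(if i < n then \<zeta> t i else \<mu> t (i - n)) - \<beta> * \<phi> t i
     = (\<Sum>j<2*n. A_f n a b c i j * \<phi> t j) + B_f n i * \<upsilon> t
       + (\<Sum>j<n. \<Gamma> i j * (\<Sum>k<n. (mexp n (mtrans (companion n c)) t j k
                                   - (if j = k then exp (- \<beta> * t) else 0)) * x0 k))"
    using w0 unfolding w_def chi_def epsf[symmetric] by simp
qed

end
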